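(* Consider a $(1+\varepsilon)$-adversarial sampling process (as in the context) on $k$ elements with $0<\varepsilon<1/2$ and initial weights normalized so that $\sum_{e\in E_0}w_0(e)=k$. Let $\ell_{max}$ be the largest $\ell\in\{1,2,\ldots,\lfloor |S_0|/2\rfloor\}$ that is bad, if such an $\ell$ exists, and $\ell_{max}=1$ otherwise. Then, for every realization of the process and every $i\in\{0,1,\ldots,k-1\}$, \[ \frac{w_i(E_i)}{k-i}\le 90\,\ell_{max}. \]
   Context: The $(1+\varepsilon)$-adversarial sampling process: initially there is a set $E_0$ of $k$ elements with nonnegative weights $w_0$. In round $i$, let $D_i$ be the distribution on $E_i$ with $\Pr_{D_i}(e)=w_i(e)/\sum_{e'\in E_i}w_i(e')$; an adversary chooses any distribution $D_i^\varepsilon$ on $E_i$ with $(1-\varepsilon)\Pr_{D_i}(e)\le\Pr_{D_i^\varepsilon}(e)\le(1+\varepsilon)\Pr_{D_i}(e)$ for all $e$; an element $e_{i+1}$ is sampled from $D_i^\varepsilon$ and $E_{i+1}=E_i\setminus\{e_{i+1}\}$; then the adversary chooses weights $0\le w_{i+1}(e)\le w_i(e)$ for $e\in E_{i+1}$. The adversary's choices may depend on the history. Notation: for $E\subseteq E_i$, $w_i(E)=\sum_{e\in E}w_i(e)$. For each $i$, partition $E_i=B_i\sqcup M_i\sqcup S_i$ where $e\in B_i$ iff $w_i(e)\ge 80$, $e\in M_i$ iff $2<w_i(e)<80$, and $e\in S_i$ iff $w_i(e)\le 2$. For $\ell\in\{1,\ldots,|S_0|\}$, $i_\ell$ is the smallest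 $i$ with $|S_i|=\ell$. An $\ell\in\{1,\ldots,\lfloor|S_0|/2\rfloor\}$ is called bad if both $w_{i_{2\ell}}(B_{i_{2\ell}})\le 8\ell$ and $w_{i_\ell}(B_{i_\ell})>4\ell$; otherwise it is good. *)

theory Defs
  imports Main "HOL.Real"
begin

text \<open>A realization of the (1+eps)-adversarial sampling process on k elements.
  E i : the set E_i;  w i : the weights w_i;  x (Suc i) : the element e_{i+1} sampled in round i;
  p i : the adversary's distribution D_i^eps on E_i (chosen in round i).  When w_i(E_i) = 0 the distribution
  D_i is undefined; in that case we only require that the sampled element lies in E_i.\<close>

definition adv_process ::
  "real \<Rightarrow> nat \<Rightarrow> (nat \<Rightarrow> 'a set) \<Rightarrow> (nat \<Rightarrow> 'a \<Rightarrow> real)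
     \<Rightarrow> (nat \<Rightarrow> 'a \<Rightarrow> real) \<Rightarrow> (nat \<Rightarrow> 'a) \<Rightarrow> bool" where
  "adv_process eps k E w p x \<longleftrightarrow>
     finite (E 0) \<and> card (E 0) = k \<and>
     (\<forall>e\<in>E 0. 0 \<le> w 0 e) \<and>
     (\<forall>i<k.
        x (Suc i) \<in> E i \<and>
        E (Suc i) = E i - {x (Suc i)} \<and>
        (\<forall>e\<in>E (Suc i). 0 \<le> w (Suc i) e \<and> w (Suc i) e \<le> w i e) \<and>
        (sum (w i) (E i) > 0 \<longrightarrow>
           (\<forall>e\<in>E i. (1 - eps) * (w i e / sum (w i) (E i)) \<le> p i e \<and>
                     p i e \<le> (1 + eps) * (w i e / sum (w i) (E i))) \<and>
           sum (p i) (E i) = 1 \<and>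
           p i (x (Suc i)) > 0))"

definition Bset :: "(nat \<Rightarrow> 'a set) \<Rightarrow> (nat \<Rightarrow> 'a \<Rightarrow> real) \<Rightarrow> nat \<Rightarrow> 'a set" where
  "Bset E w i = {e \<in> E i. w i e \<ge> 80}"

definition Mset :: "(nat \<Rightarrow> 'a set) \<Rightarrow> (nat \<Rightarrow> 'a \<Rightarrow> real) \<Rightarrow> nat \<Rightarrow> 'a set" where
  "Mset E w i = {e \<in> E i. 2 < w i e \<and> w i e < 80}"

definition Sset :: "(nat \<Rightarrow> 'a set) \<Rightarrow> (nat \<Rightarrow> 'a \<Rightarrow> real) \<Rightarrow> nat \<Rightarrow> 'a set" where
  "Sset E w i = {e \<in> E i. w i e \<le> 2}"

definition first_idx :: "(nat \<Rightarrow> 'a set) \<Rightarrow> (nat \<Rightarrow> 'a \<Rightarrow> real) \<Rightarrow> nat \<Rightarrow> nat" where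
  "first_idx E w l = (LEAST i. card (Sset E w i) = l)"

definition is_bad :: "(nat \<Rightarrow> 'a set) \<Rightarrow> (nat \<Rightarrow> 'a \<Rightarrow> real) \<Rightarrow> nat \<Rightarrow> bool" where
  "is_bad E w l \<longleftrightarrow>
     1 \<le> l \<and> l \<le> card (Sset E w 0) div 2 \<and>
     sum (w (first_idx E w (2 * l))) (Bset E w (first_idx E w (2 * l))) \<le> 8 * real l \<and>
     sum (w (first_idx E w l)) (Bset E w (first_idx E w l)) > 4 * real l"

definition l_max :: "(nat \<Rightarrow> 'a set) \<Rightarrow> (nat \<Rightarrow> 'a \<Rightarrow> real) \<Rightarrow> nat" where
  "l_max E w = (if \<exists>l. is_bad E w l then Max {l. is_bad E w l} else 1)"

end

theory Submission
  imports Defs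
begin

lemma ap_step:
  assumes "adv_process eps k E w p x" "i < k"
  shows "x (Suc i) \<in> E i \<and> E (Suc i) = E i - {x (Suc i)} \<and>
         (\<forall>e\<in>E (Suc i). 0 \<le> w (Suc i) e \<and> w (Suc i) e \<le> w i e)"
  using assms by (simp add: adv_process_def)

lemma ap_fin:
  assumes "adv_process eps k E w p x"
  shows "i \<le> k \<Longrightarrow> finite (E i) \<and> card (E i) = k - i \<and> (\<forall>e\<in>E i. 0 \<le> w i e)"
proof (induction i)
  case 0
  then show ?case using assms by (simp add: adv_process_def)
next
  case (Suc i)
  then have i: "i < k" by simp
  have IH: "finite (E i) \<and> card (E i) = k - i \<and> (\<forall>e\<in>E i. 0 \<le> w i e)" using Suc by simp
  note st = ap_step[OF assms i]
  show ?case using IH st by (simp add: card_Diff_singleton)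
qed

lemma ap_mono:
  assumes "adv_process eps k E w p x" "i \<le> j"
  shows "j \<le> k \<Longrightarrow> E j \<subseteq> E i \<and> (\<forall>e\<in>E j. w j e \<le> w i e)"
  using assms(2)
proof (induction j rule: dec_induct)
  case base
  then show ?case by simp
next
  case (step n)
  note st = ap_step[OF assms(1), of n]
  from step st show ?case by fastforce
qed

lemma B_mono:
  assumes "adv_process eps k E w p x" "i \<le> j" "j \<le> k"
  shows "sum (w j) (Bset E w j) \<le> sum (w i) (Bset E w i)"
proof -
  have m: "E j \<subseteq> E i" "\<forall>e\<in>E j. w j e \<le> w i e" using ap_mono[OF assms(1,2,3)] by auto
  have fi: "finite (E i)" using ap_fin[OF assms(1), of i] assms by simp
  have sub: "Bset E w j \<subseteq> Bset E w i" using m by (force simp: Bset_def)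
  have fb: "finite (Bset E w i)" using fi by (simp add: Bset_def)
  have "sum (w j) (Bset E w j) \<le> sum (w i) (Bset E w j)"
    using m by (intro sum_mono) (auto simp: Bset_def)
  also have "\<dots> \<le> sum (w i) (Bset E w i)"
    using sub fb by (intro sum_mono2) (auto simp: Bset_def)
  finally show ?thesis .
qed

lemma S_step:
  assumes "adv_process eps k E w p x" "i < k"
  shows "card (Sset E w i) \<le> Suc (card (Sset E w (Suc i)))"
proof -
  note st = ap_step[OF assms]
  have fi: "finite (E (Suc i))" using ap_fin[OF assms(1), of "Suc i"] assms by simp
  have sub: "Sset E w i - {x (Suc i)} \<subseteq> Sset E w (Suc i)"
    using st by (force simp: Sset_def)
  have fs: "finite (Sset E w (Suc i))" using fi by (simp add: Sset_def)
  have "card (Sset E w i - {x (Suc i)}) \<le> card (Sset E w (Suc i))"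
    using card_mono[OF fs sub] .
  moreover have "card (Sset E w i) \<le> Suc (card (Sset E w i - {x (Suc i)}))"
    by (cases "finite (Sset E w i)") (auto simp: card_Diff_singleton_if)
  ultimately show ?thesis by simp
qed

lemma S_k:
  assumes "adv_process eps k E w p x"
  shows "card (Sset E w k) = 0"
proof -
  have "finite (E k) \<and> card (E k) = 0" using ap_fin[OF assms, of k] by simp
  then have "E k = {}" using card_0_eq by blast
  then show ?thesis by (simp add: Sset_def)
qed

lemma first_idx_prop:
  assumes "adv_process eps k E w p x" "l \<le> card (Sset E w 0)" "i \<le> k" "card (Sset E w i) \<le> l"
  shows "first_idx E w l \<le> i \<and> card (Sset E w (first_idx E w l)) = l"
proof -
  define j where "j = (LEAST j. card (Sset E w j) \<le> l)"
  have ji: "j \<le> i" unfolding j_def using assms(4) by (rule Least_le)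
  have jl: "card (Sset E w j) \<le> l" unfolding j_def using assms(4) by (rule LeastI)
  have "card (Sset E w j) \<ge> l"
  proof (cases j)
    case 0 then show ?thesis using assms(2) by simp
  next
    case (Suc m)
    have "\<not> card (Sset E w m) \<le> l" using not_less_Least[of m "\<lambda>j. card (Sset E w j) \<le> l"] Suc j_def by simp
    moreover have "card (Sset E w m) \<le> Suc (card (Sset E w j))"
      using S_step[OF assms(1), of m] Suc ji assms(3) by simp
    ultimately show ?thesis by simp
  qed
  then have jeq: "card (Sset E w j) = l" using jl by simp
  have "first_idx E w l \<le> j" unfolding first_idx_def using jeq by (rule Least_le)
  moreover have "card (Sset E w (first_idx E w l)) = l" unfolding first_idx_def using jeq by (rule LeastI)
  ultimately show ?thesis using ji by simp
qed


theorem lemma3: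
  fixes eps :: real and k :: nat and E :: "nat \<Rightarrow> 'a set"
    and w p :: "nat \<Rightarrow> 'a \<Rightarrow> real" and x :: "nat \<Rightarrow> 'a"
  assumes "0 < eps" and "eps < 1 / 2"
    and "adv_process eps k E w p x"
    and "sum (w 0) (E 0) = real k"
    and "i < k"
  shows "sum (w i) (E i) / (real k - real i) \<le> 90 * real (l_max E w)"
proof -
  note ap = assms(3)
  define N where "N = card (Sset E w 0)"
  define L where "L = l_max E w"
  define f where "f l = sum (w (first_idx E w l)) (Bset E w (first_idx E w l))" for l
  have E0: "finite (E 0)" "card (E 0) = k" "\<forall>e\<in>E 0. 0 \<le> w 0 e" using ap_fin[OF ap, of 0] by auto
  have kN: "real k \<le> 2 * real N"
  proof -
    define T where "T = E 0 - Sset E w 0"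
    have ST: "Sset E w 0 \<subseteq> E 0" by (auto simp: Sset_def)
    have cT: "card T + N = k" unfolding T_def N_def using E0 ST
      by (metis card_Diff_subset card_mono finite_subset le_add_diff_inverse2)
    have fT: "finite T" using E0 by (simp add: T_def)
    have "sum (w 0) (E 0) = sum (w 0) (E 0 - T) + sum (w 0) T"
      using E0 by (intro sum.subset_diff) (auto simp: T_def)
    moreover have "sum (w 0) (E 0 - T) \<ge> 0" using E0 by (intro sum_nonneg) auto
    moreover have "sum (w 0) T \<ge> sum (\<lambda>_. 2) T"
      by (intro sum_mono) (auto simp: T_def Sset_def)
    ultimately have "real k \<ge> 2 * real (card T)" using assms(4) by simp
    then show ?thesis using cT by linarith
  qed
  have Sfin: "finite (Sset E w j)" if "j \<le> k" for j
    using ap_fin[OF ap, of j] that by (simp add: Sset_def)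
  have badfin: "finite {l. is_bad E w l}"
    by (rule finite_subset[of _ "{..card (Sset E w 0)}"]) (auto simp: is_bad_def)
  have L1: "1 \<le> L"
  proof (cases "\<exists>l. is_bad E w l")
    case True
    then obtain l0 where l0: "is_bad E w l0" by blast
    have "l0 \<le> Max {l. is_bad E w l}" using badfin l0 by (intro Max_ge) auto
    moreover have "1 \<le> l0" using l0 by (simp add: is_bad_def)
    ultimately show ?thesis using True by (simp add: L_def l_max_def)
  next
    case False then show ?thesis by (simp add: L_def l_max_def)
  qed
  have notbad: "\<not> is_bad E w l" if "L < l" for l
  proof
    assume b: "is_bad E w l"
    then have "l \<le> Max {l. is_bad E w l}" using badfin by (intro Max_ge) auto
    moreover have "L = Max {l. is_bad E w l}" using b by (auto simp: L_def l_max_def)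
    ultimately show False using that by simp
  qed
  have fk: "f l \<le> real k" if "l \<le> N" for l
  proof -
    have "first_idx E w l \<le> k" using first_idx_prop[OF ap, of l k] that S_k[OF ap] N_def by simp
    then have "f l \<le> sum (w 0) (Bset E w 0)" unfolding f_def using B_mono[OF ap, of 0] by simp
    also have "\<dots> \<le> sum (w 0) (E 0)" using E0 by (intro sum_mono2) (auto simp: Bset_def)
    finally show ?thesis using assms(4) by simp
  qed
  have A: "f l \<le> 4 * real l" if "1 \<le> l" "l \<le> N" "L < l" for l
    using that
  proof (induction "N - l" arbitrary: l rule: less_induct)
    case less
    show ?case
    proof (cases "N < 2 * l")
      case True
      then show ?thesis using fk[OF less.prems(2)] kN by linarith
    next
      case False
      have "N - 2 * l < N - l" using False less.prems by simp
      then have IH: "f (2 * l) \<le> 4 * real (2 * l)" using less.hyps[of "2 * l"] False less.prems by simp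
      have "l \<le> N div 2" using False by simp
      then have "\<not> (f l > 4 * real l)" using notbad[OF less.prems(3)] IH less.prems(1)
        by (simp add: is_bad_def f_def N_def)
      then show ?thesis by simp
    qed
  qed
  define n where "n = k - i"
  have n1: "1 \<le> n" using assms(5) by (simp add: n_def)
  have Ei: "finite (E i)" "card (E i) = n" "\<forall>e\<in>E i. 0 \<le> w i e"
    using ap_fin[OF ap, of i] assms(5) by (auto simp: n_def)
  have Sn: "card (Sset E w i) \<le> n" using Ei card_mono[OF Ei(1), of "Sset E w i"] by (auto simp: Sset_def)
  have Bi: "sum (w i) (Bset E w i) \<le> 8 * real L * real n"
  proof (cases "N \<le> card (Sset E w i)")
    case True
    have "sum (w i) (Bset E w i) \<le> sum (w 0) (Bset E w 0)" using B_mono[OF ap, of 0 i] assms(5) by simp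
    also have "\<dots> \<le> sum (w 0) (E 0)" using E0 by (intro sum_mono2) (auto simp: Bset_def)
    also have "\<dots> \<le> 2 * real n" using assms(4) kN True Sn by simp
    also have "\<dots> \<le> 8 * real L * real n"
      using mult_right_mono[of 2 "8 * real L" "real n"] L1 by simp
    finally show ?thesis .
  next
    case False
    define l where "l = max 1 (card (Sset E w i))"
    have lN: "l \<le> N" using False N_def E0 ap_fin[OF ap, of 0] l_def
      by simp
    have fi: "first_idx E w l \<le> i" "card (Sset E w (first_idx E w l)) = l"
      using first_idx_prop[OF ap, of l i] lN assms(5) N_def l_def by auto
    have fik: "first_idx E w l \<le> k" using fi assms(5) by simp
    have Bf: "sum (w i) (Bset E w i) \<le> f l" unfolding f_def using B_mono[OF ap, of "first_idx E w l" i] fi assms(5) by simp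
    show ?thesis
    proof (cases "L < l")
      case True
      have "f l \<le> 4 * real l" using A[OF _ lN True] l_def by simp
      moreover have "l \<le> n" using Sn n1 l_def by simp
      then have "real l \<le> real n" by simp
      ultimately have "f l \<le> 4 * real n" by linarith
      moreover have "4 * real n \<le> 8 * real L * real n"
        using mult_right_mono[of 4 "8 * real L" "real n"] L1 by simp
      ultimately show ?thesis using Bf by linarith
    next
      case lL: False
      have "f l \<le> 8 * real L"
      proof (cases "L + 1 \<le> N")
        case True
        have "first_idx E w (L + 1) \<le> first_idx E w l"
          using first_idx_prop[OF ap, of "L+1" "first_idx E w l"] True fik fi lL N_def by simp
        moreover have "first_idx E w (L + 1) \<le> k" using calculation fik by simp
        ultimately have "f l \<le> f (L + 1)" unfolding f_def using B_mono[OF ap, of "first_idx E w (L+1)" "first_idx E w l"] fik by simp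
        also have "\<dots> \<le> 4 * real (L + 1)" using A[OF _ True] by simp
        finally show ?thesis using L1 by simp
      next
        case False
        then show ?thesis using fk[OF lN] kN L1 by simp
      qed
      moreover have "8 * real L \<le> 8 * real L * real n"
        using mult_left_mono[of 1 "real n" "8 * real L"] n1 by simp
      ultimately show ?thesis using Bf by linarith
    qed
  qed
  have Bsub: "Bset E w i \<subseteq> E i" by (auto simp: Bset_def)
  have "sum (w i) (E i) = sum (w i) (E i - Bset E w i) + sum (w i) (Bset E w i)"
    using Ei Bsub by (intro sum.subset_diff) auto
  moreover have "sum (w i) (E i - Bset E w i) \<le> sum (\<lambda>_. 80) (E i - Bset E w i)"
    by (intro sum_mono) (auto simp: Bset_def)
  moreover have "card (E i - Bset E w i) \<le> n" using card_mono[OF Ei(1) Diff_subset[of "E i" "Bset E w i"]] Ei(2) by simp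
  moreover have "sum (\<lambda>_. 80) (E i - Bset E w i) = 80 * real (card (E i - Bset E w i))" by simp
  moreover have "real (card (E i - Bset E w i)) \<le> real n" using calculation(3) by simp
  ultimately have "sum (w i) (E i) \<le> 80 * real n + 8 * real L * real n" using Bi
    by linarith
  also have "\<dots> \<le> 90 * real L * real n"
    using mult_right_mono[of 80 "82 * real L" "real n"] L1 by (simp add: algebra_simps)
  finally have "sum (w i) (E i) \<le> 90 * real L * real n" .
  moreover have "real k - real i = real n" using assms(5) by (simp add: n_def)
  ultimately show ?thesis using n1 by (simp add: L_def pos_divide_le_eq)
qed

end
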